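(* Let $r>1$ be real and let $a,b\in\mathbb{S}$ be such that the open interval $(\sigma_{-r}(a),\sigma_{-r}(b))$ is a gap of $\sigma_{-r}(\mathbb{S})$. Then: (i) for every prime $p\ge P_r$, $v_p(a)=\infty$ and $v_p(b)=0$; (ii) for every prime $p<P_r$ with $v_p(a)<\infty$, $v_p(a)<\frac{\log P_r}{\log p}-1$; (iii) for every prime $p<P_r$, $v_p(b)<\frac{\log P_r}{\log p}$.
   Context: $p_m$ is the $m$-th prime. A Steinitz number is a formal product $n=\prod_p p^{\alpha_p}$ over all primes with $\alpha_p\in\mathbb{Z}_{\ge0}\cup\{\infty\}$, $v_p(n)=\alpha_p$; $\mathbb{S}$ is the set of Steinitz numbers. $\sigma_{-r}$ is defined on $\mathbb{S}$ multiplicatively by $\sigma_{-r}(p^\alpha)=\sum_{i=0}^\alpha p^{-ri}$ for finite $\alpha$ and $\sigma_{-r}(p^\infty)=\frac1{1-p^{-r}}$. A gap of $\sigma_{-r}(\mathbb{S})$ is a bounded connected component of $\mathbb{R}\setminus\sigma_{-r}(\mathbb{S})$. Let $u_m(r)=\prod_{t=m+1}^\infty\frac1{1-p_t^{-r}}$; $p_m$ is $r$-mighty if $1+p_m^{-r}>u_m(r)$. $L_r$ is the index of the largest $r$-mighty prime ($L_r=0$ if none; it is finite), and $P_r=p_{L_r+1}$. *)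

theory Defs
  imports "HOL-Analysis.Analysis" "HOL-Computational_Algebra.Primes" "HOL-Library.Extended_Nat"
begin

(* Steinitz numbers: a Steinitz number n is represented by its exponent function
   p \<mapsto> v_p(n) \<in> \<nat> \<union> {\<infinity>}; only values at primes are meaningful. *)
type_synonym steinitz = "nat \<Rightarrow> enat"

(* p_m, the m-th prime, 1-indexed: p_1 = 2 *)
definition nthp :: "nat \<Rightarrow> nat" where
  "nthp m = enumerate {p::nat. prime p} (m - 1)"

definition sigma_loc :: "real \<Rightarrow> nat \<Rightarrow> enat \<Rightarrow> real" where
  "sigma_loc r p \<alpha> = (case \<alpha> of
      enat k \<Rightarrow> (\<Sum>i\<le>k. real p powr (- r * real i))
    | \<infinity> \<Rightarrow> 1 / (1 - real p powr (- r)))"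

definition sigma_S :: "real \<Rightarrow> steinitz \<Rightarrow> real" where
  "sigma_S r a = (\<Prod>n. if prime n then sigma_loc r n (a n) else 1)"

definition is_gap :: "real \<Rightarrow> real set \<Rightarrow> bool" where
  "is_gap r G \<longleftrightarrow> G \<in> components (- range (sigma_S r)) \<and> bounded G"

definition u_tail :: "nat \<Rightarrow> real \<Rightarrow> real" where
  "u_tail m r = (\<Prod>t. 1 / (1 - real (nthp (m + 1 + t)) powr (- r)))"

definition mighty :: "real \<Rightarrow> nat \<Rightarrow> bool" where
  "mighty r m \<longleftrightarrow> 1 + real (nthp m) powr (- r) > u_tail m r"

definition L_idx :: "real \<Rightarrow> nat" where
  "L_idx r = (if \<exists>m\<ge>1. mighty r m then GREATEST m. m \<ge> 1 \<and> mighty r m else 0)"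

definition P_r :: "real \<Rightarrow> nat" where
  "P_r r = nthp (L_idx r + 1)"

end

theory Submission
  imports Defs "HOL-Number_Theory.Number_Theory" "HOL-Real_Asymp.Real_Asymp"
begin


definition psi :: "nat \<Rightarrow> real" where "psi n = (\<Sum>d\<le>n. mangoldt d)"

lemma mangoldt_dvd_sum: "(\<Sum>d\<le>Suc n. if d dvd Suc n then mangoldt d else 0) = ln (real (Suc n))"
proof -
  have "(\<Sum>d\<le>Suc n. if d dvd Suc n then mangoldt d else 0) = sum mangoldt {d\<in>{..Suc n}. d dvd Suc n}"
    by (simp only: sum.inter_filter[OF finite_atMost])
  also have "{d\<in>{..Suc n}. d dvd Suc n} = {d. d dvd Suc n}"
    by (auto dest: dvd_imp_le)
  also have "sum mangoldt {d. d dvd Suc n} = ln (real (Suc n))"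
    using mangoldt_sum[of "Suc n", where 'a=real] by simp
  finally show ?thesis .
qed

lemma Suc_div_real: "real (Suc n div d) = real (n div d) + (if d dvd Suc n \<and> d > 0 then 1 else 0)"
  by (cases "d = 0") (auto simp: div_Suc dvd_eq_mod_eq_0)

lemma ln_fact_mangoldt: "ln (fact n :: real) = (\<Sum>d\<le>n. mangoldt d * real (n div d))"
proof (induction n)
  case 0
  then show ?case by simp
next
  case (Suc n)
  have a: "ln (fact (Suc n) :: real) = ln (real (Suc n)) + ln (fact n)"
    by (simp add: ln_mult del: of_nat_Suc)
  have b: "(\<Sum>d\<le>Suc n. mangoldt d * real (Suc n div d))
     = (\<Sum>d\<le>Suc n. mangoldt d * real (n div d)) + (\<Sum>d\<le>Suc n. if d dvd Suc n then mangoldt d else 0)"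
    by (subst sum.distrib[symmetric], rule sum.cong) (auto simp: Suc_div_real algebra_simps simp del: of_nat_Suc)
  have c: "(\<Sum>d\<le>Suc n. mangoldt d * real (n div d)) = (\<Sum>d\<le>n. mangoldt d * real (n div d))"
    by simp
  show ?case using Suc mangoldt_dvd_sum a b c by simp
qed

lemma div_bounds: "2 * (n div d) \<le> (2*n) div d \<and> (2*n) div d \<le> 2 * (n div d) + 1" for n d :: nat
proof (cases "d = 0")
  case False
  define q where "q = n div d"
  define s where "s = n mod d"
  have ns: "n = d * q + s" unfolding q_def s_def by simp
  have e: "2*n = d * (2*q) + 2* s" using ns by (simp add: algebra_simps)
  have "s < d" using False unfolding s_def by simp
  then have "2* s div d \<le> 1" using less_mult_imp_div_less[of "2* s" 2 d] by (simp add: mult.commute)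
  moreover have "(2*n) div d = 2*q + 2* s div d" using e False by simp
  ultimately show ?thesis unfolding q_def s_def by simp
qed simp

lemma ln_binom_mangoldt:
  "ln (real ((2*n) choose n)) = (\<Sum>d\<le>2*n. mangoldt d * (real ((2*n) div d) - 2 * real (n div d)))"
proof -
  have h: "fact n * fact n * ((2*n) choose n) = (fact (2*n) :: nat)"
    using binomial_fact_lemma[of n "2*n"] by simp
  have "(fact (2*n) :: real) = of_nat (fact (2*n))" by simp
  also have "\<dots> = of_nat (fact n * fact n * ((2*n) choose n))" by (simp only: h)
  also have "\<dots> = real ((2*n) choose n) * fact n * fact n" by simp
  finally have "(fact (2*n) :: real) = real ((2*n) choose n) * fact n * fact n" .
  then have "ln (fact (2*n) :: real) = ln (real ((2*n) choose n)) + 2 * ln (fact n)"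
    by (simp add: ln_mult)
  moreover have "(\<Sum>d\<le>n. mangoldt d * real (n div d)) = (\<Sum>d\<le>2*n. mangoldt d * real (n div d))"
    by (rule sum.mono_neutral_left) auto
  ultimately have "ln (real ((2*n) choose n)) = (\<Sum>d\<le>2*n. mangoldt d * real ((2*n) div d)) - 2 * (\<Sum>d\<le>2*n. mangoldt d * real (n div d))"
    by (simp add: ln_fact_mangoldt)
  also have "\<dots> = (\<Sum>d\<le>2*n. mangoldt d * (real ((2*n) div d) - 2 * real (n div d)))"
    by (simp add: sum_subtractf sum_distrib_left algebra_simps)
  finally show ?thesis .
qed

lemma psi_upper_step: "psi (2*n) - psi n \<le> ln (real ((2*n) choose n))"
proof -
  have "psi (2*n) = psi n + (\<Sum>d\<in>{n<..2*n}. mangoldt d)"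
    unfolding psi_def by (subst sum.union_disjoint[symmetric]) (auto intro!: sum.cong)
  moreover have "(\<Sum>d\<in>{n<..2*n}. mangoldt d :: real) = (\<Sum>d\<le>2*n. if n < d then mangoldt d else 0)"
    by (simp add: sum.inter_filter[symmetric]) (intro sum.cong, auto)
  moreover have "(\<Sum>d\<le>2*n. (if n < d then mangoldt d else 0 :: real)) \<le> (\<Sum>d\<le>2*n. mangoldt d * (real ((2*n) div d) - 2 * real (n div d)))"
  proof (rule sum_mono)
    fix d assume d: "d \<in> {..2*n}"
    show "(if n < d then mangoldt d else 0) \<le> mangoldt d * (real ((2*n) div d) - 2 * real (n div d))"
    proof (cases "n < d")
      case True
      then have "n div d = 0" by simp
      moreover have "(2*n) div d = 1" using True d by (simp add: div_nat_eqI)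
      ultimately show ?thesis using True by simp
    next
      case False
      have "2 * (n div d) \<le> (2*n) div d" using div_bounds by blast
      then have "0 \<le> real ((2*n) div d) - 2 * real (n div d)" by linarith
      then show ?thesis using False mangoldt_nonneg[of d] by simp
    qed
  qed
  ultimately show ?thesis using ln_binom_mangoldt[of n] by linarith
qed

lemma psi_lower: "ln (real ((2*n) choose n)) \<le> psi (2*n)"
  unfolding ln_binom_mangoldt psi_def
proof (rule sum_mono)
  fix d
  have "(2*n) div d \<le> 2 * (n div d) + 1" using div_bounds by blast
  then have "real ((2*n) div d) - 2 * real (n div d) \<le> 1" by linarith
  then show "mangoldt d * (real ((2*n) div d) - 2 * real (n div d)) \<le> mangoldt d"
    using mangoldt_nonneg[of d] by (metis mult_left_le)
qed

lemma ln_binom_upper: "ln (real ((2*n) choose n)) \<le> real n * ln 4"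
proof -
  have pos: "0 < real ((2*n) choose n)" by simp
  have "real ((2*n) choose n) \<le> 2^(2*n)" using binomial_le_pow2[of "2*n" n]
    by (metis of_nat_le_iff of_nat_numeral of_nat_power)
  also have "(2::real)^(2*n) = 4^n" by (simp add: power_mult)
  finally have "ln (real ((2*n) choose n)) \<le> ln (4^n)" using pos by simp
  also have "ln ((4::real)^n) = real n * ln 4" by (simp add: ln_realpow)
  finally show ?thesis .
qed

lemma ln_binom_lower: "n > 0 \<Longrightarrow> real n * ln 4 - ln (2 * real n) \<le> ln (real ((2*n) choose n))"
proof -
  assume n: "n > 0"
  have "4^n / (2*real n) \<le> real ((2*n) choose n)" by (rule central_binomial_lower_bound[OF n])
  then have "ln (4^n / (2*real n)) \<le> ln (real ((2*n) choose n))" using n by simp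
  moreover have "ln ((4::real)^n / (2*real n)) = real n * ln 4 - ln (2 * real n)"
    using n by (simp add: ln_div ln_realpow)
  ultimately show ?thesis by simp
qed

lemma psi_pow2: "psi (2^k) \<le> 2^k * ln 4"
proof (induction k)
  case 0
  then show ?case by (simp add: psi_def)
next
  case (Suc k)
  have "psi (2 * 2^k) \<le> psi (2^k) + real (2^k) * ln 4"
    using psi_upper_step[of "2^k"] ln_binom_upper[of "2^k"] by simp
  then show ?case using Suc by simp
qed

lemma psi_diff_le_card:
  assumes "A \<le> B" "B > 0"
  shows "psi B - psi A \<le> real (card {d\<in>{A<..B}. primepow d}) * ln (real B)"
proof -
  have "psi B = psi A + (\<Sum>d\<in>{A<..B}. mangoldt d)"
    unfolding psi_def using assms(1) by (subst sum.union_disjoint[symmetric]) (auto intro!: sum.cong)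
  moreover have "(\<Sum>d\<in>{A<..B}. mangoldt d :: real) = (\<Sum>d\<in>{d\<in>{A<..B}. primepow d}. mangoldt d)"
    by (rule sum.mono_neutral_right) (auto simp: mangoldt_def)
  moreover have "(\<Sum>d\<in>{d\<in>{A<..B}. primepow d}. mangoldt d :: real) \<le> (\<Sum>d\<in>{d\<in>{A<..B}. primepow d}. ln (real B))"
  proof (rule sum_mono)
    fix d assume d: "d \<in> {d\<in>{A<..B}. primepow d}"
    then have "d > 0" "d \<le> B" by auto
    then have "mangoldt d \<le> ln (real d)" by (simp add: mangoldt_le)
    also have "\<dots> \<le> ln (real B)" using \<open>d > 0\<close> \<open>d \<le> B\<close> by simp
    finally show "mangoldt d \<le> ln (real B)" .
  qed
  ultimately show ?thesis by simp
qed

lemma proper_pp_card: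
  assumes "B \<ge> 1"
  shows "real (card {d. d \<le> B \<and> primepow d \<and> \<not> prime d}) \<le> (sqrt (real B) + 1) * (log 2 (real B) + 1)"
proof -
  define s where "s = nat \<lfloor>sqrt (real B)\<rfloor>"
  define t where "t = nat \<lfloor>log 2 (real B)\<rfloor>"
  have sub: "{d. d \<le> B \<and> primepow d \<and> \<not> prime d} \<subseteq> (\<lambda>(p,k). p^k) ` ({..s} \<times> {..t})"
  proof
    fix d assume "d \<in> {d. d \<le> B \<and> primepow d \<and> \<not> prime d}"
    then have dB: "d \<le> B" and pp: "primepow d" and np: "\<not> prime d" by auto
    from pp obtain p k where p: "prime p" "k > 0" "d = p^k" by (auto simp: primepow_def)
    have "k \<noteq> 1" using p np by auto
    with p have k2: "k \<ge> 2" by simp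
    have p2: "p \<ge> 2" using p prime_ge_2_nat by blast
    have "p^2 \<le> p^k" using k2 p2 by (simp add: power_increasing)
    then have "p^2 \<le> B" using dB p by simp
    then have "real (p ^ 2) \<le> real B" by (simp only: of_nat_le_iff)
    then have "real p ^ 2 \<le> real B" by simp
    then have "real p \<le> sqrt (real B)" using real_le_rsqrt by blast
    then have ps: "p \<le> s" unfolding s_def by (simp add: le_nat_floor)
    have "2^k \<le> p^k" using p2 by (simp add: power_mono)
    moreover have "p^k \<le> B" using dB p(3) by simp
    ultimately have "2^k \<le> B" by (rule le_trans)
    then have "real (2 ^ k) \<le> real B" by (simp only: of_nat_le_iff)
    then have "(2::real) powr (real k) \<le> real B" by (simp add: powr_realpow)
    then have "real k \<le> log 2 (real B)" using assms by (subst le_log_iff) auto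
    then have kt: "k \<le> t" unfolding t_def by (simp add: le_nat_floor)
    show "d \<in> (\<lambda>(p,k). p^k) ` ({..s} \<times> {..t})" using ps kt p by auto
  qed
  have "card {d. d \<le> B \<and> primepow d \<and> \<not> prime d} \<le> card ((\<lambda>(p,k). p^k) ` ({..s} \<times> {..t}))"
    by (rule card_mono[OF _ sub]) auto
  also have "\<dots> \<le> card ({..s} \<times> {..t})" by (rule card_image_le) auto
  also have "\<dots> = (s+1)*(t+1)" by (simp add: card_cartesian_product)
  finally have "real (card {d. d \<le> B \<and> primepow d \<and> \<not> prime d}) \<le> real ((s+1)*(t+1))"
    by (simp only: of_nat_le_iff)
  then have c: "real (card {d. d \<le> B \<and> primepow d \<and> \<not> prime d}) \<le> (real s + 1) * (real t + 1)"
    by (simp add: algebra_simps)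
  have "real s \<le> sqrt (real B)" unfolding s_def by simp
  moreover have "real t \<le> log 2 (real B)" unfolding t_def using assms by simp
  ultimately have "(real s + 1) * (real t + 1) \<le> (sqrt (real B) + 1) * (log 2 (real B) + 1)"
    by (intro mult_mono) auto
  with c show ?thesis by linarith
qed

definition Fb :: "real \<Rightarrow> real" where
  "Fb y = (6*y*ln 4 - ln (16*y) - (sqrt (16*y) + 1) * (log 2 (16*y) + 1) * ln (16*y)) / ln (16*y)"

lemma Fb_tendsto: "filterlim Fb at_top at_top"
  unfolding Fb_def by real_asymp

lemma primes_count_lower:
  "Fb (2^k) \<le> real (card {q. prime q \<and> 2^(k+1) < q \<and> q \<le> (2::nat)^(k+4)})"
proof -
  define y :: real where "y = 2^k"
  define A :: nat where "A = 2^(k+1)"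
  define B :: nat where "B = 2^(k+4)"
  have y1: "y \<ge> 1" unfolding y_def by simp
  have Ay: "real A = 2*y" unfolding A_def y_def by simp
  have By: "real B = 16*y" unfolding B_def y_def by (simp add: power_add)
  have AB: "A \<le> B" unfolding A_def B_def by (simp add: power_add)
  have B1: "B \<ge> 1" unfolding B_def by simp
  have lnB: "ln (real B) > 0" using B1 By y1 by simp
  have "B = 2 * 2^(k+3)" unfolding B_def by (simp add: power_add)
  then have "ln (real (2^(k+3))) * 0 + (real (2^(k+3)) * ln 4 - ln (2 * real (2^(k+3)))) \<le> psi B"
    using ln_binom_lower[of "2^(k+3)"] psi_lower[of "2^(k+3)"] by simp
  then have psiB: "8*y*ln 4 - ln (16*y) \<le> psi B" unfolding y_def by (simp add: power_add)
  have psiA: "psi A \<le> 2*y*ln 4" using psi_pow2[of "k+1"] unfolding A_def y_def by simp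
  have "psi B - psi A \<le> real (card {d\<in>{A<..B}. primepow d}) * ln (real B)"
    by (rule psi_diff_le_card[OF AB]) (use B1 in simp)
  define cpp where "cpp = card {d\<in>{A<..B}. primepow d}"
  define cp where "cp = card {q. prime q \<and> A < q \<and> q \<le> B}"
  define cq where "cq = card {d. d \<le> B \<and> primepow d \<and> \<not> prime d}"
  have "cpp \<le> cp + cq"
  proof -
    have "{d\<in>{A<..B}. primepow d} \<subseteq> {q. prime q \<and> A < q \<and> q \<le> B} \<union> {d. d \<le> B \<and> primepow d \<and> \<not> prime d}"
      by auto
    then have "card {d\<in>{A<..B}. primepow d} \<le> card ({q. prime q \<and> A < q \<and> q \<le> B} \<union> {d. d \<le> B \<and> primepow d \<and> \<not> prime d})"
      by (rule card_mono[rotated]) auto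
    also have "\<dots> \<le> card {q. prime q \<and> A < q \<and> q \<le> B} + card {d. d \<le> B \<and> primepow d \<and> \<not> prime d}"
      by (rule card_Un_le)
    finally show ?thesis unfolding cpp_def cp_def cq_def .
  qed
  then have "real cpp \<le> real cp + real cq" by linarith
  moreover have "real cq \<le> (sqrt (real B) + 1) * (log 2 (real B) + 1)"
    unfolding cq_def by (rule proper_pp_card[OF B1])
  ultimately have "real cpp \<le> real cp + (sqrt (16*y) + 1) * (log 2 (16*y) + 1)" using By by simp
  then have "real cpp * ln (real B) \<le> (real cp + (sqrt (16*y) + 1) * (log 2 (16*y) + 1)) * ln (real B)"
    using lnB by (intro mult_right_mono) auto
  moreover have "psi B - psi A \<le> real cpp * ln (real B)" unfolding cpp_def
    by (rule psi_diff_le_card[OF AB]) (use B1 in simp)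
  ultimately have "6*y*ln 4 - ln (16*y) \<le> (real cp + (sqrt (16*y) + 1) * (log 2 (16*y) + 1)) * ln (real B)"
    using psiA psiB by linarith
  then have "6*y*ln 4 - ln (16*y) \<le> (real cp + (sqrt (16*y) + 1) * (log 2 (16*y) + 1)) * ln (16*y)"
    using By by simp
  then have "6*y*ln 4 - ln (16*y) - (sqrt (16*y) + 1) * (log 2 (16*y) + 1) * ln (16*y) \<le> real cp * ln (16*y)"
    by (simp add: algebra_simps)
  then have "Fb y \<le> real cp"
    unfolding Fb_def using lnB By by (simp add: divide_le_eq)
  then show ?thesis unfolding y_def A_def B_def cp_def by simp
qed

lemma many_primes:
  "\<exists>k0. \<forall>k\<ge>k0. N \<le> card {q. prime q \<and> 2^(k+1) < q \<and> q \<le> (2::nat)^(k+4)}"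
proof -
  have "eventually (\<lambda>y. Fb y \<ge> real N) at_top"
    using filterlim_at_top[THEN iffD1, OF Fb_tendsto] by blast
  then obtain Y where Y: "\<forall>y\<ge>Y. Fb y \<ge> real N" by (auto simp: eventually_at_top_linorder)
  obtain k0 where k0: "Y < (2::real)^k0" using real_arch_pow[of 2 Y] by auto
  have "N \<le> card {q. prime q \<and> 2^(k+1) < q \<and> q \<le> (2::nat)^(k+4)}" if "k \<ge> k0" for k
  proof -
    have "(2::real)^k0 \<le> 2^k" using that by (rule power_increasing) simp
    then have "Y \<le> 2^k" using k0 by linarith
    then have "Fb (2^k) \<ge> real N" using Y by blast
    then show ?thesis using primes_count_lower[of k] by linarith
  qed
  then show ?thesis by blast
qed



definition xr :: "real \<Rightarrow> nat \<Rightarrow> real" where "xr r n = real n powr (-r)"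
definition gs :: "real \<Rightarrow> nat \<Rightarrow> nat \<Rightarrow> real" where "gs r n k = (\<Sum>i\<le>k. xr r n ^ i)"
definition W :: "real \<Rightarrow> nat \<Rightarrow> real" where "W r n = - ln (1 - xr r n)"
definition lf :: "real \<Rightarrow> nat \<Rightarrow> enat \<Rightarrow> real" where "lf r n a = ln (sigma_loc r n a)"

lemma xr_pos: "n \<ge> 2 \<Longrightarrow> 0 < xr r n"
  unfolding xr_def by simp

lemma xr_le_half:
  assumes "r > 1" "n \<ge> 2" shows "xr r n \<le> 1/2"
proof -
  have "real n powr (-r) \<le> 2 powr (-r)"
    by (rule powr_mono2') (use assms in auto)
  also have "(2::real) powr (-r) \<le> 2 powr (-1)"
    by (rule powr_mono) (use assms in auto)
  also have "(2::real) powr (-1) = 1/2" by (simp add: powr_minus_divide)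
  finally show ?thesis unfolding xr_def .
qed

lemma xr_lt1: "r > 1 \<Longrightarrow> n \<ge> 2 \<Longrightarrow> xr r n < 1"
  using xr_le_half[of r n] by simp

lemma sigma_loc_fin: "n \<ge> 2 \<Longrightarrow> sigma_loc r n (enat k) = gs r n k"
proof -
  assume n: "n \<ge> 2"
  have "real n powr (- r * real i) = xr r n ^ i" for i
  proof -
    have "xr r n ^ i = (real n powr (-r)) powr (real i)"
      unfolding xr_def using n by (subst powr_realpow) auto
    also have "\<dots> = real n powr (- r * real i)" by (simp add: powr_powr)
    finally show ?thesis by simp
  qed
  then show ?thesis unfolding sigma_loc_def gs_def by simp
qed

lemma sigma_loc_inf: "sigma_loc r n \<infinity> = 1 / (1 - xr r n)"
  unfolding sigma_loc_def xr_def by simp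

lemma gs_0: "gs r n 0 = 1" unfolding gs_def by simp
lemma gs_Suc: "gs r n (Suc k) = gs r n k + xr r n ^ Suc k" unfolding gs_def by simp

lemma gs_ge1: "n \<ge> 2 \<Longrightarrow> 1 \<le> gs r n k"
proof (induction k)
  case 0 then show ?case by (simp add: gs_0)
next
  case (Suc k)
  have "0 \<le> xr r n ^ Suc k" using xr_pos[OF Suc.prems, of r] by (meson less_imp_le zero_le_power)
  then show ?case using Suc by (simp add: gs_Suc)
qed

lemma gs_closed: "r > 1 \<Longrightarrow> n \<ge> 2 \<Longrightarrow> gs r n k = (1 - xr r n ^ Suc k) / (1 - xr r n)"
  unfolding gs_def using xr_lt1[of r n] by (subst sum_gp0) auto

lemma gs_less: assumes "r > 1" "n \<ge> 2" shows "gs r n k < 1 / (1 - xr r n)"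
proof -
  have "0 < xr r n ^ Suc k" using xr_pos[OF assms(2), of r] by simp
  moreover have "0 < 1 - xr r n" using xr_lt1[OF assms] by simp
  ultimately show ?thesis unfolding gs_closed[OF assms] by (simp add: divide_strict_right_mono)
qed

lemma W_eq: "r > 1 \<Longrightarrow> n \<ge> 2 \<Longrightarrow> W r n = ln (1 / (1 - xr r n))"
  unfolding W_def using xr_lt1[of r n] by (simp add: ln_div)

lemma lf_inf: "r > 1 \<Longrightarrow> n \<ge> 2 \<Longrightarrow> lf r n \<infinity> = W r n"
  unfolding lf_def sigma_loc_inf by (simp add: W_eq)

lemma lf_fin: "n \<ge> 2 \<Longrightarrow> lf r n (enat k) = ln (gs r n k)"
  unfolding lf_def by (simp add: sigma_loc_fin)

lemma lf_zero: "n \<ge> 2 \<Longrightarrow> lf r n 0 = 0"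
  using lf_fin[of n r 0] by (simp add: zero_enat_def gs_0)

lemma lf_fin_nonneg: "n \<ge> 2 \<Longrightarrow> 0 \<le> lf r n (enat k)"
  using gs_ge1[of n r k] by (simp add: lf_fin)

lemma lf_fin_less: assumes "r > 1" "n \<ge> 2" shows "lf r n (enat k) < W r n"
proof -
  have "0 < gs r n k" using gs_ge1[OF assms(2)] by (meson less_le_trans zero_less_one)
  moreover have "gs r n k < 1 / (1 - xr r n)" by (rule gs_less[OF assms])
  moreover have "xr r n < 1" by (rule xr_lt1[OF assms])
  ultimately have "ln (gs r n k) < ln (1 / (1 - xr r n))"
    by (subst ln_less_cancel_iff) auto
  then show ?thesis by (simp add: lf_fin[OF assms(2)] W_eq[OF assms])
qed

lemma W_ge_xr: assumes "r > 1" "n \<ge> 2" shows "xr r n \<le> W r n"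
proof -
  have "ln (1 - xr r n) \<le> (1 - xr r n) - 1"
    by (rule ln_le_minus_one) (use xr_lt1[OF assms] in simp)
  then show ?thesis unfolding W_def by simp
qed

lemma W_le_2xr: assumes "r > 1" "n \<ge> 2" shows "W r n \<le> 2 * xr r n"
proof -
  have x: "0 < xr r n" "xr r n \<le> 1/2" using xr_pos[OF assms(2), of r] xr_le_half[OF assms] by auto
  have "W r n = ln (1 / (1 - xr r n))" by (rule W_eq[OF assms])
  also have "\<dots> \<le> 1 / (1 - xr r n) - 1" by (rule ln_le_minus_one) (use x in simp)
  also have "\<dots> = xr r n / (1 - xr r n)" using x by (simp add: field_simps)
  also have "\<dots> \<le> 2 * xr r n" using x by (simp add: field_simps)
  finally show ?thesis .
qed

lemma W_nonneg: "r > 1 \<Longrightarrow> n \<ge> 2 \<Longrightarrow> 0 \<le> W r n"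
  using W_ge_xr[of r n] xr_pos[of n r] by linarith

lemma lf_nonneg: "r > 1 \<Longrightarrow> n \<ge> 2 \<Longrightarrow> 0 \<le> lf r n a"
  by (cases a) (auto simp: lf_fin_nonneg lf_inf W_nonneg)

lemma lf_le_W: "r > 1 \<Longrightarrow> n \<ge> 2 \<Longrightarrow> lf r n a \<le> W r n"
  by (cases a) (auto simp: lf_inf intro: less_imp_le lf_fin_less)

lemma ln1p_le_W: assumes "r > 1" "n \<ge> 2" shows "ln (1 + xr r n) \<le> W r n"
proof -
  have "ln (1 + xr r n) \<le> (1 + xr r n) - 1" by (rule ln_le_minus_one) (use xr_pos[OF assms(2), of r] in simp)
  then show ?thesis using W_ge_xr[OF assms] by simp
qed

lemma lf_Suc_diff:
  assumes "r > 1" "n \<ge> 2"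
  shows "0 < lf r n (enat (Suc k)) - lf r n (enat k)"
    and "lf r n (enat (Suc k)) - lf r n (enat k) \<le> ln (1 + xr r n ^ Suc k)"
proof -
  have g1: "1 \<le> gs r n k" by (rule gs_ge1[OF assms(2)])
  have xp: "0 < xr r n ^ Suc k" using xr_pos[OF assms(2), of r] by simp
  have "lf r n (enat (Suc k)) - lf r n (enat k) = ln (gs r n (Suc k) / gs r n k)"
    using g1 xp by (simp add: lf_fin[OF assms(2)] gs_Suc ln_div)
  also have "gs r n (Suc k) / gs r n k = 1 + xr r n ^ Suc k / gs r n k"
    using g1 by (simp add: gs_Suc field_simps)
  finally have e: "lf r n (enat (Suc k)) - lf r n (enat k) = ln (1 + xr r n ^ Suc k / gs r n k)" .
  have "0 < xr r n ^ Suc k / gs r n k" using g1 xp by simp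
  then show "0 < lf r n (enat (Suc k)) - lf r n (enat k)" unfolding e by simp
  have "xr r n ^ Suc k / gs r n k \<le> xr r n ^ Suc k / 1" by (rule divide_left_mono) (use g1 xp in auto)
  then have "xr r n ^ Suc k / gs r n k \<le> xr r n ^ Suc k" by simp
  moreover have "0 < 1 + xr r n ^ Suc k / gs r n k" using xp g1 by (simp add: add_pos_pos)
  ultimately show "lf r n (enat (Suc k)) - lf r n (enat k) \<le> ln (1 + xr r n ^ Suc k)" unfolding e
    by (subst ln_le_cancel_iff) auto
qed

lemma lf_inf_diff:
  assumes "r > 1" "n \<ge> 2"
  shows "lf r n \<infinity> - lf r n (enat k) = - ln (1 - xr r n ^ Suc k)"
proof -
  have x: "0 < xr r n" "xr r n < 1" using xr_pos[OF assms(2), of r] xr_lt1[OF assms] by auto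
  have xk: "xr r n ^ Suc k < 1" using x by (rule power_Suc_less_one)
  have xk0: "0 < xr r n ^ Suc k" using x by simp
  have "lf r n \<infinity> - lf r n (enat k) = ln (1 / (1 - xr r n)) - ln ((1 - xr r n ^ Suc k) / (1 - xr r n))"
    by (simp add: lf_inf[OF assms] lf_fin[OF assms(2)] gs_closed[OF assms] W_eq[OF assms])
  also have "\<dots> = - ln (1 - xr r n ^ Suc k)"
    using x xk by (simp add: ln_div)
  finally show ?thesis .
qed

lemma xr_pow_le:
  assumes "r > 1" "p \<ge> 2" "P \<ge> 1" "P \<le> p ^ j"
  shows "xr r p ^ j \<le> xr r P"
proof -
  have "xr r p ^ j = (real p powr (-r)) ^ j" unfolding xr_def ..
  also have "\<dots> = real (p ^ j) powr (-r)" using assms(2) by (simp add: powr_realpow[symmetric] powr_powr mult.commute)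
  also have "\<dots> \<le> real P powr (-r)"
    by (rule powr_mono2') (use assms in auto)
  finally show ?thesis unfolding xr_def .
qed


definition Wp :: "real \<Rightarrow> nat \<Rightarrow> real" where "Wp r n = (if prime n then W r n else 0)"
definition ell :: "real \<Rightarrow> steinitz \<Rightarrow> nat \<Rightarrow> real" where "ell r c n = (if prime n then lf r n (c n) else 0)"
definition FS :: "real \<Rightarrow> steinitz \<Rightarrow> real" where "FS r c = suminf (ell r c)"

lemma prime_ge2: "prime (n::nat) \<Longrightarrow> n \<ge> 2" using prime_ge_2_nat by blast

lemma Wp_nonneg: "r > 1 \<Longrightarrow> 0 \<le> Wp r n"
  unfolding Wp_def by (auto intro: W_nonneg prime_ge2)

lemma summable_Wp: assumes "r > 1" shows "summable (Wp r)"
proof (rule summable_comparison_test)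
  show "summable (\<lambda>n. 2 * real n powr (-r))"
    using assms by (intro summable_mult) (simp add: summable_real_powr_iff)
  show "\<exists>N. \<forall>n\<ge>N. norm (Wp r n) \<le> 2 * real n powr (-r)"
  proof (intro exI allI impI)
    fix n :: nat
    show "norm (Wp r n) \<le> 2 * real n powr (-r)"
    proof (cases "prime n")
      case True
      then have "n \<ge> 2" by (rule prime_ge2)
      then show ?thesis using True W_le_2xr[OF assms] W_nonneg[OF assms] unfolding Wp_def xr_def by auto
    qed (simp add: Wp_def)
  qed
qed

lemma ell_nonneg: "r > 1 \<Longrightarrow> 0 \<le> ell r c n"
  unfolding ell_def by (auto intro: lf_nonneg prime_ge2)

lemma ell_le_Wp: "r > 1 \<Longrightarrow> ell r c n \<le> Wp r n"
  unfolding ell_def Wp_def by (auto intro: lf_le_W prime_ge2)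

lemma summable_ell: assumes "r > 1" shows "summable (ell r c)"
  by (rule summable_comparison_test[OF _ summable_Wp[OF assms]])
     (use ell_nonneg[OF assms] ell_le_Wp[OF assms] in auto)

lemma sigma_loc_pos: assumes "r > 1" "n \<ge> 2" shows "0 < sigma_loc r n a"
proof (cases a)
  case (enat k)
  then show ?thesis using gs_ge1[OF assms(2), of r k] by (simp add: sigma_loc_fin[OF assms(2)])
next
  case infinity
  then show ?thesis using xr_lt1[OF assms] by (simp add: sigma_loc_inf)
qed

lemma sigma_S_exp: assumes "r > 1" shows "sigma_S r c = exp (FS r c)"
proof -
  have "(\<lambda>n. if prime n then sigma_loc r n (c n) else 1) = (\<lambda>n. exp (ell r c n))"
  proof
    fix n
    show "(if prime n then sigma_loc r n (c n) else 1) = exp (ell r c n)"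
      using sigma_loc_pos[OF assms prime_ge2, of n] by (auto simp: ell_def lf_def)
  qed
  then show ?thesis unfolding sigma_S_def FS_def using prodinf_exp[OF summable_ell[OF assms]] by simp
qed

definition G :: "real \<Rightarrow> nat \<Rightarrow> nat \<Rightarrow> real" where "G r P n = (if P \<le> n then Wp r n else 0)"
definition Tmax :: "real \<Rightarrow> nat \<Rightarrow> real" where "Tmax r P = suminf (G r P)"
definition tt :: "real \<Rightarrow> nat \<Rightarrow> steinitz \<Rightarrow> nat \<Rightarrow> real" where "tt r P c n = (if P \<le> n then ell r c n else 0)"
definition Tl :: "real \<Rightarrow> nat \<Rightarrow> steinitz \<Rightarrow> real" where "Tl r P c = suminf (tt r P c)"
definition Hd :: "real \<Rightarrow> nat \<Rightarrow> steinitz \<Rightarrow> real" where "Hd r P c = (\<Sum>n<P. ell r c n)"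
definition Tgt :: "real \<Rightarrow> nat \<Rightarrow> real" where "Tgt r n = suminf (\<lambda>m. if n < m then Wp r m else 0)"
definition comb :: "nat \<Rightarrow> steinitz \<Rightarrow> steinitz \<Rightarrow> steinitz" where "comb P c d = (\<lambda>n. if n < P then c n else d n)"

lemma summable_G: "r > 1 \<Longrightarrow> summable (G r P)"
  by (rule summable_comparison_test[OF _ summable_Wp]) (auto simp: G_def Wp_nonneg)

lemma summable_tt: "r > 1 \<Longrightarrow> summable (tt r P c)"
  by (rule summable_comparison_test[OF _ summable_ell]) (auto simp: tt_def ell_nonneg)

lemma summable_Tgt: "r > 1 \<Longrightarrow> summable (\<lambda>m. if n < m then Wp r m else 0)"
  by (rule summable_comparison_test[OF _ summable_Wp]) (auto simp: Wp_nonneg)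

lemma FS_split: assumes "r > 1" shows "FS r c = Hd r P c + Tl r P c"
proof -
  have "FS r c = (\<Sum>n. ell r c (n + P)) + (\<Sum>i<P. ell r c i)"
    unfolding FS_def by (rule suminf_split_initial_segment[OF summable_ell[OF assms]])
  moreover have "Tl r P c = (\<Sum>n. tt r P c (n + P)) + (\<Sum>i<P. tt r P c i)"
    unfolding Tl_def by (rule suminf_split_initial_segment[OF summable_tt[OF assms]])
  moreover have "(\<Sum>i<P. tt r P c i) = 0" by (simp add: tt_def)
  moreover have "(\<lambda>n. tt r P c (n + P)) = (\<lambda>n. ell r c (n + P))" by (simp add: tt_def)
  ultimately show ?thesis unfolding Hd_def by simp
qed

lemma Hd_comb: "Hd r P (comb P c d) = Hd r P c"
  unfolding Hd_def comb_def ell_def by (rule sum.cong) auto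

lemma Tl_comb: "Tl r P (comb P c d) = Tl r P d"
  unfolding Tl_def comb_def tt_def ell_def by (rule arg_cong[where f=suminf]) auto

lemma Tl_nonneg: "r > 1 \<Longrightarrow> 0 \<le> Tl r P c"
  unfolding Tl_def by (rule suminf_nonneg[OF summable_tt]) (auto simp: tt_def ell_nonneg)

lemma Tl_le: "r > 1 \<Longrightarrow> Tl r P c \<le> Tmax r P"
  unfolding Tl_def Tmax_def by (rule suminf_le[OF _ summable_tt summable_G]) (auto simp: tt_def G_def ell_le_Wp)

lemma Tl_lt:
  assumes "r > 1" "prime q" "P \<le> q" "c q \<noteq> \<infinity>"
  shows "Tl r P c < Tmax r P"
proof -
  have "0 < (\<Sum>n. G r P n - tt r P c n)"
  proof (rule suminf_pos2)
    show "summable (\<lambda>n. G r P n - tt r P c n)" using summable_G[OF assms(1)] summable_tt[OF assms(1)] by (rule summable_diff)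
    show "0 \<le> G r P n - tt r P c n" for n using ell_le_Wp[OF assms(1)] by (simp add: G_def tt_def)
    obtain k where k: "c q = enat k" using assms(4) by auto
    have "lf r q (c q) < W r q" using k lf_fin_less[OF assms(1) prime_ge2[OF assms(2)]] by simp
    then show "0 < G r P q - tt r P c q" using assms by (simp add: G_def tt_def Wp_def ell_def)
  qed
  also have "\<dots> = Tmax r P - Tl r P c"
    unfolding Tmax_def Tl_def by (rule suminf_diff[symmetric, OF summable_G[OF assms(1)] summable_tt[OF assms(1)]])
  finally show ?thesis by simp
qed

lemma Tl_pos:
  assumes "r > 1" "prime q" "P \<le> q" "c q \<noteq> 0"
  shows "0 < Tl r P c"
  unfolding Tl_def
proof (rule suminf_pos2[OF summable_tt[OF assms(1)]])
  show "0 \<le> tt r P c n" for n by (simp add: tt_def ell_nonneg[OF assms(1)])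
  have q2: "q \<ge> 2" by (rule prime_ge2[OF assms(2)])
  have "0 < lf r q (c q)"
  proof (cases "c q")
    case (enat k)
    then obtain j where j: "k = Suc j" using assms(4) by (cases k) (auto simp: zero_enat_def)
    have "0 < lf r q (enat (Suc j)) - lf r q (enat j)" by (rule lf_Suc_diff(1)[OF assms(1) q2])
    then show ?thesis using lf_fin_nonneg[OF q2, of r j] enat j by simp
  next
    case infinity
    then show ?thesis using lf_fin_less[OF assms(1) q2, of 0] lf_fin_nonneg[OF q2, of r 0] lf_inf[OF assms(1) q2] by simp
  qed
  then show "0 < tt r P c q" using assms by (simp add: tt_def ell_def)
qed

lemma Tl_all_inf:
  assumes "r > 1" "\<forall>q. prime q \<and> P \<le> q \<longrightarrow> c q = \<infinity>"
  shows "Tl r P c = Tmax r P"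
  unfolding Tl_def Tmax_def
  by (rule arg_cong[where f=suminf]) (use assms in \<open>auto simp: tt_def G_def ell_def Wp_def lf_inf prime_ge2\<close>)

lemma Tl_all_zero:
  assumes "r > 1" "\<forall>q. prime q \<and> P \<le> q \<longrightarrow> c q = 0"
  shows "Tl r P c = 0"
proof -
  have "tt r P c = (\<lambda>n. 0)" using assms by (auto simp: tt_def ell_def lf_zero prime_ge2)
  then show ?thesis unfolding Tl_def by simp
qed

lemma Hd_upd:
  assumes "p < P"
  shows "Hd r P (c(p := a)) = Hd r P c - ell r c p + ell r (c(p := a)) p"
proof -
  have fin: "finite {..<P}" by simp
  have pin: "p \<in> {..<P}" using assms by simp
  have "Hd r P (c(p := a)) = ell r (c(p := a)) p + (\<Sum>n\<in>{..<P} - {p}. ell r (c(p := a)) n)"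
    unfolding Hd_def by (rule sum.remove[OF fin pin])
  also have "(\<Sum>n\<in>{..<P} - {p}. ell r (c(p := a)) n) = (\<Sum>n\<in>{..<P} - {p}. ell r c n)"
    by (rule sum.cong) (auto simp: ell_def)
  also have "Hd r P c = ell r c p + (\<Sum>n\<in>{..<P} - {p}. ell r c n)"
    unfolding Hd_def by (rule sum.remove[OF fin pin])
  ultimately show ?thesis by linarith
qed

lemma W_le_Tmax:
  assumes "r > 1" "prime q" "P \<le> q"
  shows "W r q \<le> Tmax r P"
proof -
  have "sum (G r P) {q} \<le> suminf (G r P)"
    by (rule sum_le_suminf[OF summable_G[OF assms(1)]]) (auto simp: G_def Wp_nonneg[OF assms(1)])
  then show ?thesis using assms unfolding Tmax_def by (simp add: G_def Wp_def)
qed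


definition chc :: "real \<Rightarrow> nat \<Rightarrow> real \<Rightarrow> real \<Rightarrow> nat \<Rightarrow> enat" where
  "chc r P y s n = (if prime n \<and> P \<le> n then (if s + W r n \<le> y then \<infinity>
      else enat (LEAST k. y < s + lf r n (enat (Suc k)))) else 0)"

primrec acc :: "real \<Rightarrow> nat \<Rightarrow> real \<Rightarrow> nat \<Rightarrow> real" where
  "acc r P y 0 = 0"
| "acc r P y (Suc n) = acc r P y n + (if prime n \<and> P \<le> n then lf r n (chc r P y (acc r P y n) n) else 0)"

definition dsel :: "real \<Rightarrow> nat \<Rightarrow> real \<Rightarrow> steinitz" where
  "dsel r P y = (\<lambda>n. chc r P y (acc r P y n) n)"

lemma acc_sum: "(\<Sum>m<n. tt r P (dsel r P y) m) = acc r P y n"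
  by (induction n) (auto simp: tt_def ell_def dsel_def)

lemma Tgt_eq:
  assumes "r > 1" "P \<le> n"
  shows "Tgt r n = Tmax r P - (\<Sum>m<Suc n. G r P m)"
proof -
  let ?H = "\<lambda>m. if n < m then Wp r m else 0"
  have "Tgt r n = (\<Sum>m. ?H (m + Suc n)) + (\<Sum>i<Suc n. ?H i)"
    unfolding Tgt_def by (rule suminf_split_initial_segment[OF summable_Tgt[OF assms(1)]])
  moreover have "Tmax r P = (\<Sum>m. G r P (m + Suc n)) + (\<Sum>i<Suc n. G r P i)"
    unfolding Tmax_def by (rule suminf_split_initial_segment[OF summable_G[OF assms(1)]])
  moreover have "(\<Sum>i<Suc n. ?H i) = 0" by simp
  moreover have "(\<lambda>m. ?H (m + Suc n)) = (\<lambda>m. G r P (m + Suc n))" using assms(2) by (auto simp: G_def)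
  ultimately show ?thesis by simp
qed

lemma exists_big_lf:
  assumes "r > 1" "n \<ge> 2" "t < W r n"
  shows "\<exists>k. t < lf r n (enat (Suc k))"
proof -
  define e where "e = W r n - t"
  have e: "e > 0" using assms unfolding e_def by simp
  have x: "0 < xr r n" "xr r n < 1" using xr_pos[OF assms(2), of r] xr_lt1[OF assms(1,2)] by auto
  have "0 < 1 - exp (- e)" using e by simp
  then obtain N where N: "xr r n ^ N < 1 - exp (- e)" using real_arch_pow_inv x(2) by blast
  have "xr r n ^ Suc (Suc N) \<le> xr r n ^ N" using x by (intro power_decreasing) auto
  then have u: "xr r n ^ Suc (Suc N) < 1 - exp (- e)" using N by linarith
  have u0: "0 < xr r n ^ Suc (Suc N)" using x by simp
  have lt: "exp (- e) < 1 - xr r n ^ Suc (Suc N)" using u by linarith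
  have pos: "0 < 1 - xr r n ^ Suc (Suc N)" using lt exp_gt_zero[of "-e"] by linarith
  have "ln (exp (- e)) < ln (1 - xr r n ^ Suc (Suc N))"
    using lt pos by (subst ln_less_cancel_iff) auto
  then have "- ln (1 - xr r n ^ Suc (Suc N)) < e" by simp
  then have "lf r n \<infinity> - lf r n (enat (Suc N)) < e" using lf_inf_diff[OF assms(1,2), of "Suc N"] by simp
  then have "t < lf r n (enat (Suc N))" using lf_inf[OF assms(1,2)] unfolding e_def by simp
  then show ?thesis by blast
qed

lemma greedy_inv:
  assumes r: "r > 1"
    and NM: "\<forall>n. prime n \<and> P \<le> n \<longrightarrow> ln (1 + xr r n) \<le> Tgt r n"
    and y: "0 \<le> y" "y \<le> Tmax r P"
  shows "acc r P y n \<le> y \<and> y \<le> acc r P y n + (Tmax r P - (\<Sum>m<n. G r P m))"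
proof (induction n)
  case 0
  then show ?case using y by simp
next
  case (Suc n)
  define s where "s = acc r P y n"
  have IH: "s \<le> y" "y \<le> s + (Tmax r P - (\<Sum>m<n. G r P m))" using Suc unfolding s_def by auto
  show ?case
  proof (cases "prime n \<and> P \<le> n")
    case False
    then have "acc r P y (Suc n) = s" unfolding s_def using False by auto
    moreover have "G r P n = 0" using False by (auto simp: G_def Wp_def)
    ultimately show ?thesis using IH by simp
  next
    case True
    then have n2: "n \<ge> 2" using prime_ge2 by blast
    have Gn: "G r P n = W r n" using True by (simp add: G_def Wp_def)
    show ?thesis
    proof (cases "s + W r n \<le> y")
      case True2: True
      then have "acc r P y (Suc n) = s + W r n"
        using True unfolding s_def by (simp add: chc_def lf_inf[OF r n2])
      then show ?thesis using IH True2 Gn by simp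
    next
      case False2: False
      define k where "k = (LEAST k. y < s + lf r n (enat (Suc k)))"
      have ch: "chc r P y s n = enat k" using True False2 unfolding chc_def k_def by simp
      have accS: "acc r P y (Suc n) = s + lf r n (enat k)"
        using True ch unfolding s_def by simp
      have ex: "\<exists>k. y - s < lf r n (enat (Suc k))"
        by (rule exists_big_lf[OF r n2]) (use False2 in simp)
      then have ex': "\<exists>k. y < s + lf r n (enat (Suc k))" by (metis diff_less_eq add.commute)
      have k1: "y < s + lf r n (enat (Suc k))" unfolding k_def by (rule LeastI_ex[OF ex'])
      have k2: "s + lf r n (enat k) \<le> y"
      proof (cases k)
        case 0
        then show ?thesis using IH lf_zero[OF n2, of r] by (simp add: zero_enat_def)
      next
        case (Suc j)
        have "\<not> y < s + lf r n (enat (Suc j))"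
          by (rule not_less_Least) (simp add: Suc k_def[symmetric])
        then show ?thesis using Suc by simp
      qed
      have x: "0 < xr r n" "xr r n < 1" using xr_pos[OF n2, of r] xr_lt1[OF r n2] by auto
      have "xr r n ^ Suc k \<le> xr r n" using x by (simp add: power_le_one mult_left_le)
      moreover have "0 < 1 + xr r n ^ Suc k" using x by (simp add: add_pos_pos)
      ultimately have "ln (1 + xr r n ^ Suc k) \<le> ln (1 + xr r n)" using x by (subst ln_le_cancel_iff) auto
      moreover have "lf r n (enat (Suc k)) - lf r n (enat k) \<le> ln (1 + xr r n ^ Suc k)"
        by (rule lf_Suc_diff(2)[OF r n2])
      moreover have "ln (1 + xr r n) \<le> Tmax r P - (\<Sum>m<Suc n. G r P m)"
        using NM True Tgt_eq[OF r, of P n] by auto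
      ultimately have "y \<le> acc r P y (Suc n) + (Tmax r P - (\<Sum>m<Suc n. G r P m))"
        using k1 accS by linarith
      then show ?thesis using k2 accS by simp
    qed
  qed
qed

lemma tail_fill:
  assumes r: "r > 1"
    and NM: "\<forall>n. prime n \<and> P \<le> n \<longrightarrow> ln (1 + xr r n) \<le> Tgt r n"
    and y: "0 \<le> y" "y \<le> Tmax r P"
  shows "Tl r P (dsel r P y) = y"
proof -
  have inv: "acc r P y n \<le> y \<and> y \<le> acc r P y n + (Tmax r P - (\<Sum>m<n. G r P m))" for n
    by (rule greedy_inv[OF r NM y])
  have G: "(\<lambda>n. \<Sum>m<n. G r P m) \<longlonglongrightarrow> Tmax r P"
    unfolding Tmax_def by (rule summable_LIMSEQ[OF summable_G[OF r]])
  have low: "(\<lambda>n. y - (Tmax r P - (\<Sum>m<n. G r P m))) \<longlonglongrightarrow> y - (Tmax r P - Tmax r P)"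
    by (intro tendsto_intros G)
  have "(\<lambda>n. acc r P y n) \<longlonglongrightarrow> y"
  proof (rule tendsto_sandwich[OF _ _ _ tendsto_const])
    show "eventually (\<lambda>n. y - (Tmax r P - (\<Sum>m<n. G r P m)) \<le> acc r P y n) sequentially"
      using inv by (auto intro!: always_eventually simp: algebra_simps)
    show "eventually (\<lambda>n. acc r P y n \<le> y) sequentially"
      using inv by (auto intro!: always_eventually)
    show "(\<lambda>n. y - (Tmax r P - (\<Sum>m<n. G r P m))) \<longlonglongrightarrow> y" using low by simp
  qed
  then have "tt r P (dsel r P y) sums y" unfolding sums_def acc_sum .
  then show ?thesis unfolding Tl_def by (rule sums_unique[symmetric])
qed

lemma fill:
  assumes r: "r > 1"
    and NM: "\<forall>n. prime n \<and> P \<le> n \<longrightarrow> ln (1 + xr r n) \<le> Tgt r n"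
    and v: "Hd r P c \<le> v" "v \<le> Hd r P c + Tmax r P"
  shows "\<exists>c'. FS r c' = v"
proof -
  define d where "d = dsel r P (v - Hd r P c)"
  have "Tl r P d = v - Hd r P c" unfolding d_def by (rule tail_fill[OF r NM]) (use v in auto)
  then have "FS r (comb P c d) = v" by (simp add: FS_split[OF r, of _ P] Hd_comb Tl_comb)
  then show ?thesis by blast
qed


definition PS :: "nat set" where "PS = {p. prime p}"

lemma infS: "infinite PS" unfolding PS_def using primes_infinite .

lemma nthp_alt: "nthp m = enumerate PS (m - 1)"
  unfolding nthp_def PS_def by simp

lemma PS_iff: "n \<in> PS \<longleftrightarrow> prime n" unfolding PS_def by simp

lemma nthp_prime: "prime (nthp m)"
  unfolding nthp_alt using enumerate_in_set[OF infS] by (simp add: PS_iff)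

lemma nthp_ge: "m - 1 \<le> nthp m"
  unfolding nthp_alt by (rule le_enumerate[OF infS])

lemma strict_mono_tail: "strict_mono (\<lambda>t. nthp (m + 1 + t))"
  unfolding strict_mono_def nthp_alt using infS by simp

lemma range_tail:
  assumes "m \<ge> 1"
  shows "range (\<lambda>t. nthp (m + 1 + t)) = {n. prime n \<and> nthp m < n}"
proof
  show "range (\<lambda>t. nthp (m + 1 + t)) \<subseteq> {n. prime n \<and> nthp m < n}"
  proof
    fix n assume "n \<in> range (\<lambda>t. nthp (m + 1 + t))"
    then obtain t where t: "n = nthp (m + 1 + t)" by auto
    have "nthp m < n" unfolding t nthp_alt using infS assms by simp
    then show "n \<in> {n. prime n \<and> nthp m < n}" using nthp_prime t by simp
  qed
  show "{n. prime n \<and> nthp m < n} \<subseteq> range (\<lambda>t. nthp (m + 1 + t))"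
  proof
    fix n assume n: "n \<in> {n. prime n \<and> nthp m < n}"
    then obtain i where i: "enumerate PS i = n" using enumerate_Ex[OF infS] by (auto simp: PS_iff)
    have "enumerate PS (m - 1) < enumerate PS i" using n i by (auto simp: nthp_alt)
    then have "m - 1 < i" using infS by simp
    then have "nthp (m + 1 + (i - m)) = n" using i assms by (simp add: nthp_alt)
    then show "n \<in> range (\<lambda>t. nthp (m + 1 + t))" by (metis rangeI)
  qed
qed

lemma u_tail_eq:
  assumes r: "r > 1" and m: "m \<ge> 1"
  shows "u_tail m r = exp (Tgt r (nthp m))"
proof -
  let ?g = "\<lambda>t. nthp (m + 1 + t)"
  let ?H = "\<lambda>n. if nthp m < n then Wp r n else 0"
  have zero: "?H n = 0" if "n \<notin> range ?g" for n
    using that range_tail[OF m] by (auto simp: Wp_def)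
  have "?H sums Tgt r (nthp m)" unfolding Tgt_def by (rule summable_sums[OF summable_Tgt[OF r]])
  moreover have "(\<lambda>t. ?H (?g t)) sums Tgt r (nthp m) \<longleftrightarrow> ?H sums Tgt r (nthp m)"
    by (rule sums_mono_reindex) (rule strict_mono_tail, rule zero)
  ultimately have "(\<lambda>t. ?H (?g t)) sums Tgt r (nthp m)" by blast
  moreover have "(\<lambda>t. ?H (?g t)) = (\<lambda>t. W r (?g t))"
  proof
    fix t
    have "?g t \<in> range ?g" by simp
    then have "prime (?g t) \<and> nthp m < ?g t" using range_tail[OF m] by blast
    then show "?H (?g t) = W r (?g t)" by (simp add: Wp_def)
  qed
  ultimately have S: "(\<lambda>t. W r (?g t)) sums Tgt r (nthp m)" by simp
  have "(\<lambda>t. 1 / (1 - real (nthp (m + 1 + t)) powr - r)) = (\<lambda>t. exp (W r (?g t)))"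
  proof
    fix t
    have g2: "?g t \<ge> 2" using nthp_prime prime_ge2 by blast
    have "xr r (?g t) < 1" by (rule xr_lt1[OF r g2])
    then show "1 / (1 - real (nthp (m + 1 + t)) powr - r) = exp (W r (?g t))"
      unfolding W_def xr_def by (simp add: exp_minus inverse_eq_divide)
  qed
  then have "u_tail m r = prodinf (\<lambda>t. exp (W r (?g t)))" unfolding u_tail_def by simp
  also have "\<dots> = exp (suminf (\<lambda>t. W r (?g t)))"
    by (rule prodinf_exp) (use S in \<open>simp add: sums_summable\<close>)
  also have "suminf (\<lambda>t. W r (?g t)) = Tgt r (nthp m)" using S by (rule sums_unique[symmetric])
  finally show ?thesis .
qed

lemma not_mighty_iff:
  assumes "r > 1" "m \<ge> 1"
  shows "(\<not> mighty r m) \<longleftrightarrow> 1 + xr r (nthp m) \<le> exp (Tgt r (nthp m))"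
  unfolding mighty_def u_tail_eq[OF assms] xr_def by auto

lemma mighty_finite:
  assumes r: "r > 1"
  shows "\<exists>M. \<forall>m\<ge>M. \<not> mighty r m"
proof -
  define N where "N = nat \<lceil>16 powr r\<rceil>"
  have N: "16 powr r \<le> real N" unfolding N_def by linarith
  obtain k0 where k0: "\<forall>k\<ge>k0. N \<le> card {q. prime q \<and> 2^(k+1) < q \<and> q \<le> (2::nat)^(k+4)}"
    using many_primes by blast
  have "\<not> mighty r m" if m: "m \<ge> 2^k0 + 1" for m
  proof -
    define p where "p = nthp m"
    have m1: "m \<ge> 1" using m by simp
    have pk0: "2^k0 \<le> p" using nthp_ge[of m] m unfolding p_def by linarith
    have p2: "p \<ge> 2" unfolding p_def using nthp_prime prime_ge2 by blast
    obtain k where k: "2^k \<le> p" "p < 2^(k+1)" using ex_power_ivl1[of 2 p] p2 by auto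
    have "(2::nat)^k0 < 2^(k+1)" using pk0 k by linarith
    then have "k0 < k + 1" by (rule power_less_imp_less_exp[rotated]) simp
    then have "k \<ge> k0" by simp
    define Q where "Q = {q. prime q \<and> 2^(k+1) < q \<and> q \<le> (2::nat)^(k+4)}"
    have cardQ: "N \<le> card Q" using k0 \<open>k \<ge> k0\<close> unfolding Q_def by blast
    have finQ: "finite Q" unfolding Q_def by (rule finite_subset[of _ "{..2^(k+4)}"]) auto
    let ?H = "\<lambda>n. if p < n then Wp r n else 0"
    have "sum ?H Q \<le> suminf ?H"
      by (rule sum_le_suminf[OF summable_Tgt[OF r] finQ]) (auto simp: Wp_nonneg[OF r])
    then have sQ: "sum ?H Q \<le> Tgt r p" unfolding Tgt_def .
    have each: "real (16 * p) powr (-r) \<le> ?H q" if q: "q \<in> Q" for q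
    proof -
      have qp: "prime q" "p < q" "q \<le> 2^(k+4)" using q k unfolding Q_def by auto
      have q2: "q \<ge> 2" using qp prime_ge2 by blast
      have "(2::nat)^(k+4) = 16 * 2^k" by (simp add: power_add)
      then have "q \<le> 16 * p" using qp k by linarith
      then have "real (16 * p) powr (-r) \<le> real q powr (-r)"
        by (intro powr_mono2') (use r q2 in auto)
      also have "\<dots> = xr r q" unfolding xr_def ..
      also have "\<dots> \<le> W r q" by (rule W_ge_xr[OF r q2])
      finally show ?thesis using qp by (simp add: Wp_def)
    qed
    define z where "z = real (16 * p) powr (-r)"
    have zeq: "z = 16 powr (-r) * real p powr (-r)" unfolding z_def by (simp add: powr_mult)
    have "real (card Q) * z \<le> sum ?H Q"
      using sum_mono[OF each] unfolding z_def by simp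
    moreover have "real N * z \<le> real (card Q) * z"
      using cardQ unfolding z_def by (intro mult_right_mono) auto
    ultimately have B0: "real N * z \<le> sum ?H Q" by linarith
    have "1 \<le> real N * 16 powr (-r)"
    proof -
      have "16 powr r * 16 powr (-r) \<le> real N * 16 powr (-r)" using N by (intro mult_right_mono) auto
      moreover have "(16::real) powr r * 16 powr (-r) = 1" by (simp add: powr_minus field_simps)
      ultimately show ?thesis by simp
    qed
    then have "1 * real p powr (-r) \<le> (real N * 16 powr (-r)) * real p powr (-r)"
      by (rule mult_right_mono) simp
    also have "\<dots> = real N * z" unfolding zeq by (simp add: ac_simps)
    finally have "real p powr (-r) \<le> Tgt r p" using B0 sQ by linarith
    then have "1 + xr r p \<le> exp (Tgt r p)"
      unfolding xr_def using exp_ge_add_one_self[of "Tgt r p"] by linarith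
    then show ?thesis using not_mighty_iff[OF r m1] unfolding p_def by simp
  qed
  then show ?thesis by blast
qed

lemma L_props:
  assumes r: "r > 1"
  shows "\<forall>m \<ge> L_idx r + 1. \<not> mighty r m"
proof (cases "\<exists>m\<ge>1. mighty r m")
  case True
  obtain M where M: "\<forall>m\<ge>M. \<not> mighty r m" using mighty_finite[OF r] by blast
  have bound: "y \<le> M" if "y \<ge> 1 \<and> mighty r y" for y
  proof (rule ccontr)
    assume "\<not> y \<le> M"
    then show False using M that by simp
  qed
  have L: "L_idx r = (GREATEST m. m \<ge> 1 \<and> mighty r m)" unfolding L_idx_def using True by simp
  have le: "m \<le> L_idx r" if "m \<ge> 1" "mighty r m" for m
    unfolding L by (rule Greatest_le_nat[of _ m M]) (use that bound in auto)
  show ?thesis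
  proof (intro allI impI)
    fix m assume m: "m \<ge> L_idx r + 1"
    show "\<not> mighty r m"
    proof
      assume "mighty r m"
      then have "m \<le> L_idx r" using le m by simp
      then show False using m by simp
    qed
  qed
next
  case False
  then have "L_idx r = 0" unfolding L_idx_def by auto
  then show ?thesis using False by auto
qed

lemma P_prime: "prime (P_r r)" unfolding P_r_def by (rule nthp_prime)

lemma NM_P:
  assumes r: "r > 1"
  shows "\<forall>n. prime n \<and> P_r r \<le> n \<longrightarrow> ln (1 + xr r n) \<le> Tgt r n"
proof (intro allI impI)
  fix n assume n: "prime n \<and> P_r r \<le> n"
  obtain i where i: "enumerate PS i = n" using enumerate_Ex[OF infS] n by (auto simp: PS_iff)
  have "enumerate PS (L_idx r) \<le> enumerate PS i"
    using n i unfolding P_r_def nthp_alt by auto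
  then have Li: "L_idx r \<le> i" using infS by simp
  have ni: "nthp (i + 1) = n" using i by (simp add: nthp_alt)
  have "\<not> mighty r (i + 1)" using L_props[OF r] Li by simp
  then have "1 + xr r n \<le> exp (Tgt r n)" using not_mighty_iff[OF r, of "i+1"] ni by simp
  moreover have "0 < 1 + xr r n" using xr_pos[of n r] n prime_ge2 by (simp add: add_pos_pos)
  ultimately have "ln (1 + xr r n) \<le> ln (exp (Tgt r n))" by (subst ln_le_cancel_iff) auto
  then show "ln (1 + xr r n) \<le> Tgt r n" by simp
qed


lemma W_mono_le:
  assumes "r > 1" "n \<ge> 2" "0 < u" "u \<le> xr r n"
  shows "- ln (1 - u) \<le> W r n"
proof -
  have "xr r n < 1" by (rule xr_lt1[OF assms(1,2)])
  then have "ln (1 - xr r n) \<le> ln (1 - u)" using assms by (subst ln_le_cancel_iff) auto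
  then show ?thesis unfolding W_def by simp
qed

lemma ln1p_mono_W:
  assumes "r > 1" "n \<ge> 2" "0 < u" "u \<le> xr r n"
  shows "ln (1 + u) \<le> W r n"
proof -
  have "ln (1 + u) \<le> ln (1 + xr r n)" using assms by (subst ln_le_cancel_iff) auto
  then show ?thesis using ln1p_le_W[OF assms(1,2)] by linarith
qed

lemma pow_ge_of_log:
  assumes "prime p" "P \<ge> 1" "\<not> (real k < ln (real P) / ln (real p))"
  shows "P \<le> p ^ k"
proof -
  have p2: "p \<ge> 2" using assms(1) prime_ge2 by blast
  have lp: "ln (real p) > 0" using p2 by simp
  have "ln (real P) \<le> real k * ln (real p)" using assms(3) lp by (simp add: divide_le_eq not_less)
  also have "\<dots> = ln (real (p ^ k))" using p2 by (simp add: ln_realpow)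
  finally have "ln (real P) \<le> ln (real (p ^ k))" .
  then have "real P \<le> real (p ^ k)" using assms(2) p2 by (subst (asm) ln_le_cancel_iff) auto
  then show ?thesis by simp
qed

theorem mainTheorem15:
  fixes r :: real and a b :: steinitz
  assumes "r > 1"
    and "is_gap r {sigma_S r a <..< sigma_S r b}"
  shows "(\<forall>p. prime p \<and> p \<ge> P_r r \<longrightarrow> a p = \<infinity> \<and> b p = 0)
       \<and> (\<forall>p k. prime p \<and> p < P_r r \<and> a p = enat k \<longrightarrow>
              real k < ln (real (P_r r)) / ln (real p) - 1)
       \<and> (\<forall>p. prime p \<and> p < P_r r \<longrightarrow>
              (\<exists>k. b p = enat k \<and> real k < ln (real (P_r r)) / ln (real p)))"
proof -
  have r: "r > 1" by (rule assms(1))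
  define P where "P = P_r r"
  have Pp: "prime P" unfolding P_def by (rule P_prime)
  have P2: "P \<ge> 2" using Pp prime_ge2 by blast
  have NM: "\<forall>n. prime n \<and> P \<le> n \<longrightarrow> ln (1 + xr r n) \<le> Tgt r n" unfolding P_def by (rule NM_P[OF r])
  have comp: "{sigma_S r a <..< sigma_S r b} \<in> components (- range (sigma_S r))"
    using assms(2) unfolding is_gap_def by blast
  have "{sigma_S r a <..< sigma_S r b} \<noteq> {}" using in_components_nonempty[OF comp] .
  then have "sigma_S r a < sigma_S r b" by simp
  then have ab: "FS r a < FS r b" by (simp add: sigma_S_exp[OF r])
  have sub: "{sigma_S r a <..< sigma_S r b} \<subseteq> - range (sigma_S r)" using in_components_subset[OF comp] .
  have nogap: "\<not> (FS r a < v \<and> v < FS r b)" if hv: "Hd r P c \<le> v" "v \<le> Hd r P c + Tmax r P" for c v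
  proof
    assume v: "FS r a < v \<and> v < FS r b"
    obtain c' where c': "FS r c' = v" using fill[OF r NM hv] by blast
    have "sigma_S r c' \<in> {sigma_S r a <..< sigma_S r b}" using v c' by (simp add: sigma_S_exp[OF r])
    then show False using sub by auto
  qed
  define \<delta> where "\<delta> = FS r b - FS r a"
  have dpos: "\<delta> > 0" using ab unfolding \<delta>_def by simp
  have deq: "FS r b = FS r a + \<delta>" unfolding \<delta>_def by simp
  have splitA: "FS r a = Hd r P a + Tl r P a" by (rule FS_split[OF r])
  have splitB: "FS r b = Hd r P b + Tl r P b" by (rule FS_split[OF r])
  have TlA0: "0 \<le> Tl r P a" "Tl r P a \<le> Tmax r P" using Tl_nonneg[OF r] Tl_le[OF r] by auto
  have TlB0: "0 \<le> Tl r P b" "Tl r P b \<le> Tmax r P" using Tl_nonneg[OF r] Tl_le[OF r] by auto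
  have WP: "W r P \<le> Tmax r P" by (rule W_le_Tmax[OF r Pp]) simp
  have ainf: "\<forall>q. prime q \<and> P \<le> q \<longrightarrow> a q = \<infinity>"
  proof (rule ccontr)
    assume "\<not> ?thesis"
    then obtain q where q: "prime q" "P \<le> q" "a q \<noteq> \<infinity>" by auto
    have lt: "Tl r P a < Tmax r P" by (rule Tl_lt[of r q P a]) (use r q in auto)
    define v where "v = min (Hd r P a + Tmax r P) (FS r a + \<delta>/2)"
    have "Hd r P a \<le> v" "v \<le> Hd r P a + Tmax r P" unfolding v_def using splitA TlA0 dpos by auto
    moreover have "FS r a < v \<and> v < FS r b"
    proof -
      have 1: "v \<le> FS r a + \<delta>/2" unfolding v_def by auto
      have "FS r a < Hd r P a + Tmax r P" "FS r a < FS r a + \<delta>/2" using splitA lt dpos by auto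
      then have 2: "FS r a < v" unfolding v_def by simp
      have "v < FS r b" using 1 dpos deq by linarith
      with 2 show ?thesis by simp
    qed
    ultimately show False using nogap by blast
  qed
  have bzero: "\<forall>q. prime q \<and> P \<le> q \<longrightarrow> b q = 0"
  proof (rule ccontr)
    assume "\<not> ?thesis"
    then obtain q where q: "prime q" "P \<le> q" "b q \<noteq> 0" by auto
    have gt: "0 < Tl r P b" by (rule Tl_pos[of r q P b]) (use r q in auto)
    define v where "v = max (Hd r P b) (FS r b - \<delta>/2)"
    have "Hd r P b \<le> v" "v \<le> Hd r P b + Tmax r P" unfolding v_def using splitB TlB0 dpos by auto
    moreover have "FS r a < v \<and> v < FS r b"
    proof -
      have 1: "FS r b - \<delta>/2 \<le> v" unfolding v_def by auto
      have "Hd r P b < FS r b" "FS r b - \<delta>/2 < FS r b" using splitB gt dpos by auto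
      then have 2: "v < FS r b" unfolding v_def by simp
      have "FS r a < v" using 1 dpos deq by linarith
      with 2 show ?thesis by simp
    qed
    ultimately show False using nogap by blast
  qed
  have TlA: "Tl r P a = Tmax r P" by (rule Tl_all_inf[OF r ainf])
  have TlB: "Tl r P b = 0" by (rule Tl_all_zero[OF r bzero])
  have up: False if p: "prime p" "p < P" and D: "0 < lf r p \<alpha> - lf r p (a p)" "lf r p \<alpha> - lf r p (a p) \<le> Tmax r P" for p \<alpha>
  proof -
    define \<Delta> where "\<Delta> = lf r p \<alpha> - lf r p (a p)"
    define \<epsilon> where "\<epsilon> = min (\<delta>/2) \<Delta>"
    have eps1: "0 < \<epsilon>" using D dpos unfolding \<epsilon>_def \<Delta>_def by simp
    have eps2: "\<epsilon> \<le> \<Delta>" unfolding \<epsilon>_def by (rule min.cobounded2)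
    have eps3: "\<epsilon> \<le> \<delta>/2" unfolding \<epsilon>_def by (rule min.cobounded1)
    note eps = eps1 eps2 eps3
    have H: "Hd r P (a(p := \<alpha>)) = Hd r P a + \<Delta>"
      using Hd_upd[OF p(2), of r a \<alpha>] p(1) unfolding \<Delta>_def by (simp add: ell_def)
    define v where "v = FS r a + \<epsilon>"
    have "Hd r P (a(p := \<alpha>)) \<le> v" "v \<le> Hd r P (a(p := \<alpha>)) + Tmax r P"
      unfolding v_def H using splitA TlA D eps unfolding \<Delta>_def by auto
    moreover have "FS r a < v \<and> v < FS r b" unfolding v_def using eps dpos deq by linarith
    ultimately show False using nogap by blast
  qed
  have down: False if p: "prime p" "p < P" and D: "0 < lf r p (b p) - lf r p \<alpha>" "lf r p (b p) - lf r p \<alpha> \<le> Tmax r P" for p \<alpha>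
  proof -
    define \<Delta> where "\<Delta> = lf r p (b p) - lf r p \<alpha>"
    define \<epsilon> where "\<epsilon> = min (\<delta>/2) \<Delta>"
    have eps1: "0 < \<epsilon>" using D dpos unfolding \<epsilon>_def \<Delta>_def by simp
    have eps2: "\<epsilon> \<le> \<Delta>" unfolding \<epsilon>_def by (rule min.cobounded2)
    have eps3: "\<epsilon> \<le> \<delta>/2" unfolding \<epsilon>_def by (rule min.cobounded1)
    note eps = eps1 eps2 eps3
    have H: "Hd r P (b(p := \<alpha>)) = Hd r P b - \<Delta>"
      using Hd_upd[OF p(2), of r b \<alpha>] p(1) unfolding \<Delta>_def by (simp add: ell_def)
    define v where "v = FS r b - \<epsilon>"
    have "Hd r P (b(p := \<alpha>)) \<le> v" "v \<le> Hd r P (b(p := \<alpha>)) + Tmax r P"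
      unfolding v_def H using splitB TlB D eps unfolding \<Delta>_def by auto
    moreover have "FS r a < v \<and> v < FS r b" unfolding v_def using eps dpos deq by linarith
    ultimately show False using nogap by blast
  qed
  have part2: "real k < ln (real P) / ln (real p) - 1" if p: "prime p" "p < P" and k: "a p = enat k" for p k
  proof (rule ccontr)
    assume "\<not> ?thesis"
    then have "\<not> real (Suc k) < ln (real P) / ln (real p)" by simp
    then have Pk: "P \<le> p ^ Suc k" using pow_ge_of_log[OF p(1), of P "Suc k"] P2 by linarith
    have p2: "p \<ge> 2" using p prime_ge2 by blast
    have u: "0 < xr r p ^ Suc k" "xr r p ^ Suc k \<le> xr r P"
      using xr_pos[OF p2, of r] xr_pow_le[OF r p2 _ Pk] P2 by auto
    show False
    proof (rule up[OF p, of "enat (Suc k)"])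
      show "0 < lf r p (enat (Suc k)) - lf r p (a p)" using lf_Suc_diff(1)[OF r p2] k by simp
      have "lf r p (enat (Suc k)) - lf r p (a p) \<le> ln (1 + xr r p ^ Suc k)" using lf_Suc_diff(2)[OF r p2] k by simp
      also have "\<dots> \<le> W r P" by (rule ln1p_mono_W[OF r P2 u])
      finally show "lf r p (enat (Suc k)) - lf r p (a p) \<le> Tmax r P" using WP by linarith
    qed
  qed
  have part3: "\<exists>k. b p = enat k \<and> real k < ln (real P) / ln (real p)" if p: "prime p" "p < P" for p
  proof (cases "b p")
    case infinity
    have p2: "p \<ge> 2" using p prime_ge2 by blast
    have "P < 2 ^ Suc P" using less_exp[of "Suc P"] by simp
    also have "(2::nat) ^ Suc P \<le> p ^ Suc P" using p2 by (rule power_mono) simp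
    finally have PP: "P \<le> p ^ Suc P" by simp
    have u: "0 < xr r p ^ Suc P" "xr r p ^ Suc P \<le> xr r P"
      using xr_pos[OF p2, of r] xr_pow_le[OF r p2 _ PP] P2 by auto
    have u1: "xr r p ^ Suc P < 1" using xr_pos[OF p2, of r] xr_lt1[OF r p2] by (intro power_Suc_less_one) auto
    have e: "lf r p (b p) - lf r p (enat P) = - ln (1 - xr r p ^ Suc P)" using lf_inf_diff[OF r p2] infinity by simp
    have "False"
    proof (rule down[OF p, of "enat P"])
      have "ln (1 - xr r p ^ Suc P) < 0" using u u1 by simp
      then show "0 < lf r p (b p) - lf r p (enat P)" unfolding e by simp
      have "- ln (1 - xr r p ^ Suc P) \<le> W r P" by (rule W_mono_le[OF r P2 u])
      then show "lf r p (b p) - lf r p (enat P) \<le> Tmax r P" unfolding e using WP by linarith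
    qed
    then show ?thesis ..
  next
    case (enat k)
    have "real k < ln (real P) / ln (real p)"
    proof (rule ccontr)
      assume nk: "\<not> ?thesis"
      have Pk: "P \<le> p ^ k" using pow_ge_of_log[OF p(1) _ nk] P2 by simp
      have p2: "p \<ge> 2" using p prime_ge2 by blast
      have "k \<noteq> 0" using Pk P2 by (cases k) auto
      then obtain j where j: "k = Suc j" by (cases k) auto
      have u: "0 < xr r p ^ Suc j" "xr r p ^ Suc j \<le> xr r P"
        using xr_pos[OF p2, of r] xr_pow_le[OF r p2 _, of P "Suc j"] Pk j P2 by auto
      show False
      proof (rule down[OF p, of "enat j"])
        show "0 < lf r p (b p) - lf r p (enat j)" using lf_Suc_diff(1)[OF r p2] enat j by simp
        have "lf r p (b p) - lf r p (enat j) \<le> ln (1 + xr r p ^ Suc j)" using lf_Suc_diff(2)[OF r p2] enat j by simp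
        also have "\<dots> \<le> W r P" by (rule ln1p_mono_W[OF r P2 u])
        finally show "lf r p (b p) - lf r p (enat j) \<le> Tmax r P" using WP by linarith
      qed
    qed
    then show ?thesis using enat by blast
  qed
  show ?thesis
    using ainf bzero part2 part3 unfolding P_def[symmetric] by auto
qed

end
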